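(* Let $d\ge 2$, $2\le k\le d+1$, and let $y_1,\dots,y_N\in\{1,\dots,k\}$ be labels of a class-balanced dataset (each class has exactly $N/k\ge1$ samples). For $\boldsymbol w_1,\dots,\boldsymbol w_k,\boldsymbol z_1,\dots,\boldsymbol z_N\in\mathbb S^{d-1}$ define the sample margin regularization risk $$R=\frac1N\sum_{i=1}^N\Big(-\boldsymbol w_{y_i}^{\mathrm T}\boldsymbol z_i+\max_{j\ne y_i}\boldsymbol w_j^{\mathrm T}\boldsymbol z_i\Big).$$ Then $R\ge-\frac{k}{k-1}$, with equality if and only if $\boldsymbol w_i^{\mathrm T}\boldsymbol w_j=-\frac1{k-1}$ for all $i\ne j$ and $\boldsymbol z_i=\boldsymbol w_{y_i}$ for all $i$. Consequently minimizing $R$ yields the largest possible class margin $\arccos\frac{-1}{k-1}$ and the largest possible minimal sample margin $\frac{k}{k-1}$.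
   Context: $\mathbb S^{d-1}$ is the unit sphere in $\mathbb R^d$. Class margin: $m_c(\{\boldsymbol w_i\})=\arccos\big[\max_{i\ne j}\boldsymbol w_i^{\mathrm T}\boldsymbol w_j\big]$ for unit prototypes. Minimal sample margin: $\gamma_{\min}=\min_i\big(\boldsymbol w_{y_i}^{\mathrm T}\boldsymbol z_i-\max_{j\ne y_i}\boldsymbol w_j^{\mathrm T}\boldsymbol z_i\big)$. *)

theory Defs
  imports "HOL-Analysis.Analysis"
begin

text \<open>Classes are labelled 1..k, samples are indexed 0..N-1.
  Prototypes w :: nat => real^'d (used on {1..k}), features z (used on {..<N}),
  labels y (values in {1..k}).\<close>

definition max_other :: "nat \<Rightarrow> (nat \<Rightarrow> real^'d) \<Rightarrow> nat \<Rightarrow> real^'d \<Rightarrow> real" where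
  "max_other k w c v = Max {w j \<bullet> v | j. j \<in> {1..k} \<and> j \<noteq> c}"

definition sm_risk :: "nat \<Rightarrow> nat \<Rightarrow> (nat \<Rightarrow> real^'d) \<Rightarrow> (nat \<Rightarrow> real^'d) \<Rightarrow> (nat \<Rightarrow> nat) \<Rightarrow> real" where
  "sm_risk k N w z y =
     (1 / real N) * (\<Sum>i<N. - (w (y i) \<bullet> z i) + max_other k w (y i) (z i))"

definition class_margin :: "nat \<Rightarrow> (nat \<Rightarrow> real^'d) \<Rightarrow> real" where
  "class_margin k w = arccos (Max {w i \<bullet> w j | i j. i \<in> {1..k} \<and> j \<in> {1..k} \<and> i \<noteq> j})"

definition min_sample_margin :: "nat \<Rightarrow> nat \<Rightarrow> (nat \<Rightarrow> real^'d) \<Rightarrow> (nat \<Rightarrow> real^'d) \<Rightarrow> (nat \<Rightarrow> nat) \<Rightarrow> real" where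
  "min_sample_margin k N w z y =
     Min {w (y i) \<bullet> z i - max_other k w (y i) (z i) | i. i < N}"

end

theory Submission
  imports Defs
begin

lemma mo_set: "{w j \<bullet> v | j. j \<in> {1..k} \<and> j \<noteq> c} = (\<lambda>j. w j \<bullet> v) ` ({1..k} - {c})"
  by auto

lemma mo_ge: "j \<in> {1..k} \<Longrightarrow> j \<noteq> c \<Longrightarrow> w j \<bullet> v \<le> max_other k w c v"
  unfolding max_other_def mo_set by (rule Max_ge) auto

lemma mo_ne: "c \<in> {1..(k::nat)} \<Longrightarrow> 2 \<le> k \<Longrightarrow> {1..k} - {c} \<noteq> {}"
proof -
  assume "c \<in> {1..k}" "2 \<le> k"
  then have "(if c = 1 then 2 else 1) \<in> {1..k} - {c}" by auto
  then show ?thesis by blast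
qed

lemma mo_in: "c \<in> {1..k} \<Longrightarrow> 2 \<le> k \<Longrightarrow> \<exists>j\<in>{1..k}-{c}. max_other k w c v = w j \<bullet> v"
proof -
  assume a: "c \<in> {1..k}" "2 \<le> k"
  have "max_other k w c v \<in> (\<lambda>j. w j \<bullet> v) ` ({1..k} - {c})"
    unfolding max_other_def mo_set by (rule Max_in) (use mo_ne[OF a] in auto)
  then show ?thesis by auto
qed

lemma mo_const: "c \<in> {1..k} \<Longrightarrow> 2 \<le> k \<Longrightarrow> \<forall>j\<in>{1..k}-{c}. w j \<bullet> v = x \<Longrightarrow> max_other k w c v = x"
  using mo_in by metis

lemma mo_avg:
  assumes "c \<in> {1..k}" "2 \<le> k"
  shows "(\<Sum>j\<in>{1..k}-{c}. w j \<bullet> v) \<le> (real k - 1) * max_other k w c v"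
proof -
  have "(\<Sum>j\<in>{1..k}-{c}. w j \<bullet> v) \<le> of_nat (card ({1..k}-{c})) * max_other k w c v"
    by (rule sum_bounded_above) (auto intro: mo_ge)
  moreover have "card ({1..k}-{c}) = k - 1" using assms by simp
  ultimately show ?thesis using assms by (simp add: of_nat_diff)
qed

lemma sum_rem:
  fixes w :: "nat \<Rightarrow> real^'d"
  assumes "c \<in> {1..k}"
  shows "(\<Sum>j\<in>{1..k}-{c}. w j \<bullet> v) = (\<Sum>j\<in>{1..k}. w j) \<bullet> v - w c \<bullet> v"
  using assms by (subst sum_diff1) (auto simp: inner_sum_left)

lemma sample_bound1:
  fixes w :: "nat \<Rightarrow> real^'d"
  assumes "c \<in> {1..k}" "2 \<le> k"
  shows "((\<Sum>j\<in>{1..k}. w j) \<bullet> v - real k * (w c \<bullet> v)) / (real k - 1) \<le> - (w c \<bullet> v) + max_other k w c v"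
proof -
  have k: "real k - 1 > 0" using assms by simp
  have "(\<Sum>j\<in>{1..k}. w j) \<bullet> v - w c \<bullet> v \<le> (real k - 1) * max_other k w c v"
    using mo_avg[OF assms, of w v] sum_rem[OF assms(1), of w v] by simp
  then have "(\<Sum>j\<in>{1..k}. w j) \<bullet> v - real k * (w c \<bullet> v) \<le> (real k - 1) * (- (w c \<bullet> v) + max_other k w c v)"
    by (simp add: algebra_simps)
  then show ?thesis using k by (simp add: divide_le_eq mult.commute)
qed

lemma sample_bound2:
  fixes S v wc :: "real^'d"
  assumes "2 \<le> k" "norm v = 1" "norm wc = 1"
  shows "- (S \<bullet> S - 2 * real k * (S \<bullet> wc) + 2 * real k ^ 2) / (2 * real k * (real k - 1))
     \<le> (S \<bullet> v - real k * (wc \<bullet> v)) / (real k - 1)"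
proof -
  have k: "real k - 1 > 0" "real k > 0" using assms by auto
  have v: "v \<bullet> v = 1" and w: "wc \<bullet> wc = 1" using assms norm_eq_1 by auto
  have "0 \<le> (S - real k *\<^sub>R wc + real k *\<^sub>R v) \<bullet> (S - real k *\<^sub>R wc + real k *\<^sub>R v)" by simp
  also have "\<dots> = S \<bullet> S + 2 * real k ^ 2 - 2 * real k * (S \<bullet> wc) + 2 * real k * (S \<bullet> v) - 2 * real k ^ 2 * (wc \<bullet> v)"
    by (simp add: inner_add_left inner_add_right inner_diff_left inner_diff_right inner_commute v w
        algebra_simps power2_eq_square)
  finally have h: "- (S \<bullet> S - 2 * real k * (S \<bullet> wc) + 2 * real k ^ 2) \<le> 2 * real k * (S \<bullet> v - real k * (wc \<bullet> v))"
    by (simp add: algebra_simps power2_eq_square)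
  have "- (S \<bullet> S - 2 * real k * (S \<bullet> wc) + 2 * real k ^ 2) / (2 * real k) \<le> S \<bullet> v - real k * (wc \<bullet> v)"
    using h k by (simp add: divide_le_eq mult.commute)
  then have "- (S \<bullet> S - 2 * real k * (S \<bullet> wc) + 2 * real k ^ 2) / (2 * real k) / (real k - 1) \<le> (S \<bullet> v - real k * (wc \<bullet> v)) / (real k - 1)"
    using k by (intro divide_right_mono) auto
  then show ?thesis by (simp add: divide_divide_eq_left)
qed


lemma arith1: "(x::real) > 1 \<Longrightarrow> x * (- (p + 2 * x ^ 2) / (2 * x * (x - 1))) + (1 / (x - 1)) * p = (p - 2 * x ^ 2) / (2 * (x - 1))"
proof -
  assume x: "x > 1"
  then have a: "x - 1 \<noteq> 0" "x \<noteq> 0" by auto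
  have "x * (- (p + 2 * x ^ 2) / (2 * x * (x - 1))) = - (p + 2 * x ^ 2) / (2 * (x - 1))"
    using a by simp
  moreover have "(1 / (x - 1)) * p = (2 * p) / (2 * (x - 1))" by (metis mult_divide_mult_cancel_left_if zero_neq_numeral times_divide_eq_left mult_1)
  ultimately have "x * (- (p + 2 * x ^ 2) / (2 * x * (x - 1))) + (1 / (x - 1)) * p = (- (p + 2 * x ^ 2) + 2 * p) / (2 * (x - 1))" by (metis add_divide_distrib)
  then show ?thesis by (simp add: algebra_simps)
qed

lemma arith2: "(x::real) > 1 \<Longrightarrow> n > 0 \<Longrightarrow> (p - 2 * x ^ 2) / (2 * x * (x - 1)) = n * ((p - 2 * x ^ 2) / (2 * (x - 1))) / (n * x)"
proof -
  assume x: "x > 1" "n > 0"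
  then have "x - 1 \<noteq> 0" "x \<noteq> 0" "n \<noteq> 0" by auto
  then show ?thesis by (simp add: field_simps power2_eq_square) 
qed

lemma unit_eq:
  fixes a b :: "real^'d"
  assumes "norm a = 1" "norm b = 1" "a \<bullet> b = 1"
  shows "a = b"
proof -
  have "(a - b) \<bullet> (a - b) = a \<bullet> a - 2 * (a \<bullet> b) + b \<bullet> b"
    by (simp add: inner_diff_left inner_diff_right inner_commute)
  moreover have "a \<bullet> a = 1" "b \<bullet> b = 1" using assms norm_eq_1 by blast+
  ultimately have "(a - b) \<bullet> (a - b) = 0" using assms by simp
  then show ?thesis by simp
qed

lemma class_eq:
  fixes w :: "nat \<Rightarrow> real^'d"
  assumes c: "c \<in> {1..k}" and k: "2 \<le> k" and S: "(\<Sum>j\<in>{1..k}. w j) = 0"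
    and wc: "norm (w c) = 1" and M: "max_other k w c (w c) = -1 / (real k - 1)"
  shows "\<forall>j\<in>{1..k}-{c}. w j \<bullet> w c = -1 / (real k - 1)"
proof -
  have k1: "real k - 1 > 0" using k by simp
  have s: "(\<Sum>j\<in>{1..k}-{c}. w j \<bullet> w c) = -1"
  proof -
    have "w c \<bullet> w c = 1" using wc norm_eq_1 by blast
    then show ?thesis using sum_rem[OF c, of w "w c"] S by simp
  qed
  have card: "card ({1..k}-{c}) = k - 1" using c by simp
  have "(\<Sum>j\<in>{1..k}-{c}. (-1 / (real k - 1) - w j \<bullet> w c)) = real (k - 1) * (-1 / (real k - 1)) + 1"
    using s card by (simp add: sum_subtractf)
  also have "\<dots> = 0" using k1 k by (simp add: of_nat_diff)
  finally have z: "(\<Sum>j\<in>{1..k}-{c}. (-1 / (real k - 1) - w j \<bullet> w c)) = 0" .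
  have nn: "\<forall>j\<in>{1..k}-{c}. 0 \<le> -1 / (real k - 1) - w j \<bullet> w c"
    using mo_ge[of _ k c w "w c"] M by auto
  have "\<forall>j\<in>{1..k}-{c}. -1 / (real k - 1) - w j \<bullet> w c = 0"
    using sum_nonneg_eq_0_iff[of "{1..k}-{c}" "\<lambda>j. -1 / (real k - 1) - w j \<bullet> w c"] z nn by auto
  then show ?thesis by auto
qed

lemma arith3: "(x::real) > 1 \<Longrightarrow> (p - 2 * x ^ 2) / (2 * x * (x - 1)) = p / (2 * x * (x - 1)) - x / (x - 1)"
proof -
  assume x: "x > 1"
  then have a: "x - 1 \<noteq> 0" "x \<noteq> 0" by auto
  have "(p - 2 * x ^ 2) / (2 * x * (x - 1)) = p / (2 * x * (x - 1)) - (2 * x) * x / ((2 * x) * (x - 1))"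
    by (simp add: diff_divide_distrib power2_eq_square mult.assoc)
  also have "(2 * x) * x / ((2 * x) * (x - 1)) = x / (x - 1)" using a by simp
  finally show ?thesis .
qed

theorem theorem4:
  fixes w z :: "nat \<Rightarrow> real^'d" and y :: "nat \<Rightarrow> nat" and k N :: nat
  assumes "CARD('d) \<ge> 2"
    and "2 \<le> k" and "k \<le> CARD('d) + 1"
    and "\<forall>i<N. y i \<in> {1..k}"
    and "N mod k = 0" and "N div k \<ge> 1"
    and "\<forall>c\<in>{1..k}. card {i. i < N \<and> y i = c} = N div k"
    and "\<forall>j\<in>{1..k}. norm (w j) = 1"
    and "\<forall>i<N. norm (z i) = 1"
  shows "sm_risk k N w z y \<ge> - (real k / (real k - 1))
    \<and> (sm_risk k N w z y = - (real k / (real k - 1)) \<longleftrightarrow>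
         ((\<forall>i\<in>{1..k}. \<forall>j\<in>{1..k}. i \<noteq> j \<longrightarrow> w i \<bullet> w j = - 1 / (real k - 1))
          \<and> (\<forall>i<N. z i = w (y i))))
    \<and> (sm_risk k N w z y = - (real k / (real k - 1)) \<longrightarrow>
         class_margin k w = arccos (- 1 / (real k - 1))
         \<and> min_sample_margin k N w z y = real k / (real k - 1))
    \<and> class_margin k w \<le> arccos (- 1 / (real k - 1))
    \<and> min_sample_margin k N w z y \<le> real k / (real k - 1)"
proof -
  note yK = assms(4) and wn = assms(8) and zn = assms(9)
  define K where "K = {1..k}"
  define S where "S = (\<Sum>j\<in>K. w j)"
  define p where "p = S \<bullet> S"
  define t where "t i = - (w (y i) \<bullet> z i) + max_other k w (y i) (z i)" for i
  define m where "m i = (S \<bullet> z i - real k * (w (y i) \<bullet> z i)) / (real k - 1)" for i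
  define bb where "bb c = - (p - 2 * real k * (S \<bullet> w c) + 2 * real k ^ 2) / (2 * real k * (real k - 1))" for c
  define n where "n = N div k"
  have k1: "real k - 1 > 0" "real k > 0" using assms(2) by auto
  have Nnk: "N = n * k" using assms(5) unfolding n_def by (metis div_mult_mod_eq add_0_right)
  have n1: "n \<ge> 1" using assms(6) n_def by simp
  have Npos: "real N > 0" using Nnk n1 assms(2) by simp
  have R: "sm_risk k N w z y = (\<Sum>i<N. t i) / real N"
    unfolding sm_risk_def t_def by simp
  have tm: "m i \<le> t i" if "i < N" for i
    using sample_bound1[of "y i" k w "z i"] yK that assms(2)
    unfolding m_def t_def S_def K_def by auto
  have mb: "bb (y i) \<le> m i" if "i < N" for i
    using sample_bound2[of k "z i" "w (y i)" S] yK wn zn that assms(2)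
    unfolding m_def bb_def p_def by auto
  have tb: "bb (y i) \<le> t i" if "i < N" for i using tm mb that by (meson order_trans)
  have sq: "(\<Sum>c\<in>K. S \<bullet> w c) = p" unfolding p_def S_def by (simp add: inner_sum_right)
  have bbform: "bb c = - (p + 2 * real k ^ 2) / (2 * real k * (real k - 1)) + (1 / (real k - 1)) * (S \<bullet> w c)" for c
  proof -
    have "bb c = (- (p + 2 * real k ^ 2) + (2 * real k) * (S \<bullet> w c)) / (2 * real k * (real k - 1))"
      unfolding bb_def by (simp add: algebra_simps)
    also have "\<dots> = - (p + 2 * real k ^ 2) / (2 * real k * (real k - 1)) + ((2 * real k) * (S \<bullet> w c)) / ((2 * real k) * (real k - 1))"
      by (simp add: add_divide_distrib)
    also have "((2 * real k) * (S \<bullet> w c)) / ((2 * real k) * (real k - 1)) = (1 / (real k - 1)) * (S \<bullet> w c)"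
      using k1 by simp
    finally show ?thesis .
  qed
  have sumbb: "(\<Sum>c\<in>K. bb c) = (p - 2 * real k ^ 2) / (2 * (real k - 1))"
  proof -
    have "(\<Sum>c\<in>K. bb c) = real k * (- (p + 2 * real k ^ 2) / (2 * real k * (real k - 1))) + (1 / (real k - 1)) * p"
      unfolding bbform sum.distrib sum_distrib_left[symmetric] sq by (simp add: K_def)
    also have "\<dots> = (p - 2 * real k ^ 2) / (2 * (real k - 1))"
      using k1 by (intro arith1) auto
    finally show ?thesis .
  qed
  have grp: "(\<Sum>i<N. bb (y i)) = real n * (\<Sum>c\<in>K. bb c)"
  proof -
    have "(\<Sum>i<N. bb (y i)) = (\<Sum>c\<in>K. \<Sum>i\<in>{i. i \<in> {..<N} \<and> y i = c}. bb (y i))"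
      by (rule sum.group[symmetric]) (use yK in \<open>auto simp: K_def\<close>)
    also have "\<dots> = (\<Sum>c\<in>K. real n * bb c)"
    proof (rule sum.cong[OF refl])
      fix c assume c: "c \<in> K"
      have "(\<Sum>i\<in>{i. i \<in> {..<N} \<and> y i = c}. bb (y i)) = (\<Sum>i\<in>{i. i \<in> {..<N} \<and> y i = c}. bb c)"
        by simp
      also have "\<dots> = real (card {i. i < N \<and> y i = c}) * bb c" by simp
      finally show "(\<Sum>i\<in>{i. i \<in> {..<N} \<and> y i = c}. bb (y i)) = real n * bb c"
        using assms(7) c unfolding K_def n_def by simp
    qed
    finally show ?thesis by (simp add: sum_distrib_left)
  qed
  have sumt: "(\<Sum>i<N. bb (y i)) \<le> (\<Sum>i<N. t i)" by (rule sum_mono) (use tb in auto)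
  have hbb: "(\<Sum>i<N. bb (y i)) / real N = (p - 2 * real k ^ 2) / (2 * real k * (real k - 1))"
  proof -
    have "(p - 2 * real k ^ 2) / (2 * real k * (real k - 1)) = (\<Sum>i<N. bb (y i)) / real N"
    proof -
      have "(\<Sum>i<N. bb (y i)) / real N = real n * ((p - 2 * real k ^ 2) / (2 * (real k - 1))) / (real n * real k)"
        by (simp only: grp sumbb) (simp add: Nnk)
      then show ?thesis using k1 n1 arith2[of "real k" "real n" p] by simp
    qed
    then show ?thesis by simp
  qed
  have Rlow: "sm_risk k N w z y \<ge> (p - 2 * real k ^ 2) / (2 * real k * (real k - 1))"
  proof -
    have "(p - 2 * real k ^ 2) / (2 * real k * (real k - 1)) = (\<Sum>i<N. bb (y i)) / real N"
      using hbb by simp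
    also have "\<dots> \<le> (\<Sum>i<N. t i) / real N" using sumt Npos by (simp add: divide_right_mono)
    finally show ?thesis unfolding R .
  qed
  have p0: "p \<ge> 0" unfolding p_def by simp
  have part1: "sm_risk k N w z y \<ge> - (real k / (real k - 1))"
  proof -
    have "- (real k / (real k - 1)) \<le> (p - 2 * real k ^ 2) / (2 * real k * (real k - 1))"
      using k1 p0 by (simp add: field_simps power2_eq_square)
    then show ?thesis using Rlow by linarith
  qed
  define C where "C \<longleftrightarrow> (\<forall>i\<in>{1..k}. \<forall>j\<in>{1..k}. i \<noteq> j \<longrightarrow> w i \<bullet> w j = - 1 / (real k - 1))
          \<and> (\<forall>i<N. z i = w (y i))"
  have kk: "real k > 1" using assms(2) by simp
  have eqdir: "C" if E: "sm_risk k N w z y = - (real k / (real k - 1))"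
  proof -
    have "p / (2 * real k * (real k - 1)) \<le> 0"
      using Rlow E arith3[OF kk, of p] by linarith
    moreover have "2 * real k * (real k - 1) > 0" using k1 by simp
    ultimately have "p \<le> 0" by (simp add: divide_le_0_iff)
    then have "p = 0" using p0 by simp
    then have S0: "S = 0" unfolding p_def by simp
    have bbc: "bb c = - (real k / (real k - 1))" for c
      unfolding bb_def using \<open>p = 0\<close> S0 k1 by (simp add: power2_eq_square)
    have "(\<Sum>i<N. bb (y i)) / real N = (\<Sum>i<N. t i) / real N"
      using hbb E R \<open>p = 0\<close> arith3[OF kk, of p] by simp
    then have seq: "(\<Sum>i<N. bb (y i)) = (\<Sum>i<N. t i)" using Npos by simp
    have tbi: "t i = bb (y i)" if "i < N" for i
      using sum_mono_inv[OF seq] tb that by fastforce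
    have mi: "m i = - (real k / (real k - 1))" if "i < N" for i
      using tbi[OF that] tm[OF that] mb[OF that] bbc by (metis order_antisym)
    have ti: "t i = - (real k / (real k - 1))" if "i < N" for i
      using tbi[OF that] bbc by simp
    have dot1: "w (y i) \<bullet> z i = 1" if "i < N" for i
    proof -
      have "- (real k * (w (y i) \<bullet> z i)) / (real k - 1) = - (real k / (real k - 1))"
        using mi[OF that] unfolding m_def S0 by simp
      then have "real k * (w (y i) \<bullet> z i) = real k" using k1 by (simp add: field_simps)
      then show ?thesis using k1 by simp
    qed
    have zi: "z i = w (y i)" if "i < N" for i
      using unit_eq[of "z i" "w (y i)"] dot1[OF that] zn wn yK that by (simp add: inner_commute)
    have moi: "max_other k w (y i) (w (y i)) = -1 / (real k - 1)" if "i < N" for i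
    proof -
      have "- 1 + max_other k w (y i) (w (y i)) = - (real k / (real k - 1))"
        using ti[OF that] dot1[OF that] zi[OF that] unfolding t_def by simp
      then have "max_other k w (y i) (w (y i)) = 1 - real k / (real k - 1)" by simp
      also have "\<dots> = -1 / (real k - 1)" using k1 by (simp add: field_simps)
      finally show ?thesis .
    qed
    have cls: "\<forall>j\<in>{1..k}-{c}. w j \<bullet> w c = -1 / (real k - 1)" if c: "c \<in> {1..k}" for c
    proof -
      have "card {i. i < N \<and> y i = c} \<ge> 1" using assms(7) c n1 n_def by simp
      then obtain i where i: "i < N" "y i = c"
        by (metis (mono_tags, lifting) One_nat_def card.empty empty_Collect_eq not_less_eq_eq zero_le)
      show ?thesis
        using class_eq[OF c assms(2), of w] S0 wn c moi[OF i(1)] i(2) unfolding S_def K_def by auto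
    qed
    show ?thesis unfolding C_def using cls zi by auto
  qed
  have convdir: "sm_risk k N w z y = - (real k / (real k - 1))" if C: C
  proof -
    have ti: "t i = - (real k / (real k - 1))" if "i < N" for i
    proof -
      have yi: "y i \<in> {1..k}" using yK that by simp
      have mo: "max_other k w (y i) (w (y i)) = -1 / (real k - 1)"
        by (rule mo_const[OF yi assms(2)]) (use C yi in \<open>auto simp: C_def\<close>)
      have "w (y i) \<bullet> w (y i) = 1" using wn yi norm_eq_1 by metis
      then have "t i = -1 + -1 / (real k - 1)" unfolding t_def using C that mo by (simp add: C_def)
      also have "\<dots> = - (real k / (real k - 1))" using k1 by (simp add: field_simps)
      finally show ?thesis .
    qed
    have "(\<Sum>i<N. t i) = real N * (- (real k / (real k - 1)))" using ti by simp
    then show ?thesis unfolding R using Npos by simp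
  qed
  define Q where "Q = {w i \<bullet> w j | i j. i \<in> {1..k} \<and> j \<in> {1..k} \<and> i \<noteq> j}"
  have Qeq: "Q = (\<lambda>(i,j). w i \<bullet> w j) ` {(i,j). i \<in> {1..k} \<and> j \<in> {1..k} \<and> i \<noteq> j}"
    unfolding Q_def by auto
  have Qfin: "finite Q" unfolding Qeq
    by (rule finite_imageI, rule finite_subset[of _ "{1..k} \<times> {1..k}"]) auto
  have Qne: "Q \<noteq> {}"
  proof -
    have "w 1 \<bullet> w 2 \<in> Q" unfolding Q_def using assms(2) by force
    then show ?thesis by blast
  qed
  have cmdef: "class_margin k w = arccos (Max Q)" unfolding class_margin_def Q_def by simp
  have Qge: "w i \<bullet> w j \<le> Max Q" if "i \<in> {1..k}" "j \<in> {1..k}" "i \<noteq> j" for i j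
    using Qfin that unfolding Q_def by (intro Max_ge) auto
  have Qle1: "Max Q \<le> 1"
  proof -
    have "Max Q \<in> Q" using Qfin Qne by simp
    then obtain i j where "i \<in> {1..k}" "j \<in> {1..k}" "Max Q = w i \<bullet> w j" unfolding Q_def by auto
    then show ?thesis using norm_cauchy_schwarz[of "w i" "w j"] wn by simp
  qed
  have QgeM: "Max Q \<ge> -1 / (real k - 1)"
  proof -
    have "0 \<le> S \<bullet> S" by simp
    also have "S \<bullet> S = (\<Sum>i\<in>K. \<Sum>j\<in>K. w i \<bullet> w j)"
      unfolding S_def by (simp add: inner_sum_left inner_sum_right) (rule sum.swap)
    also have "\<dots> \<le> (\<Sum>i\<in>K. 1 + (real k - 1) * Max Q)"
    proof (rule sum_mono)
      fix i assume i: "i \<in> K"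
      have "(\<Sum>j\<in>K. w i \<bullet> w j) = w i \<bullet> w i + (\<Sum>j\<in>K-{i}. w i \<bullet> w j)"
        using i unfolding K_def by (simp add: sum.remove)
      also have "w i \<bullet> w i = 1" using wn i norm_eq_1 unfolding K_def by metis
      also have "(\<Sum>j\<in>K-{i}. w i \<bullet> w j) \<le> of_nat (card (K-{i})) * Max Q"
        by (rule sum_bounded_above) (use i Qge in \<open>auto simp: K_def\<close>)
      also have "card (K-{i}) = k - 1" using i unfolding K_def by simp
      finally show "(\<Sum>j\<in>K. w i \<bullet> w j) \<le> 1 + (real k - 1) * Max Q"
        using assms(2) by (simp add: of_nat_diff)
    qed
    also have "\<dots> = real k * (1 + (real k - 1) * Max Q)" unfolding K_def by simp
    finally have "0 \<le> 1 + (real k - 1) * Max Q" using k1 by (simp add: zero_le_mult_iff)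
    then show ?thesis using k1 by (simp add: divide_le_eq field_simps)
  qed
  have m1: "-1 \<le> -1 / (real k - 1)" using assms(2) by (simp add: divide_le_eq)
  have part_cm: "class_margin k w \<le> arccos (- 1 / (real k - 1))"
    unfolding cmdef by (rule arccos_le_arccos[OF m1 QgeM Qle1])
  define T where "T = {w (y i) \<bullet> z i - max_other k w (y i) (z i) | i. i < N}"
  have Teq: "T = (\<lambda>i. - t i) ` {..<N}" unfolding T_def t_def by auto
  have Tfin: "finite T" unfolding Teq by simp
  have msdef: "min_sample_margin k N w z y = Min T" unfolding min_sample_margin_def T_def by simp
  have Tle: "Min T \<le> - t i" if "i < N" for i using Tfin that unfolding Teq by (intro Min_le) auto
  have part_ms: "min_sample_margin k N w z y \<le> real k / (real k - 1)"
  proof -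
    have "(\<Sum>i<N. Min T) \<le> (\<Sum>i<N. - t i)" by (rule sum_mono) (use Tle in auto)
    then have "real N * Min T \<le> - (\<Sum>i<N. t i)" by (simp add: sum_negf)
    also have "- (\<Sum>i<N. t i) = - real N * sm_risk k N w z y" unfolding R using Npos by simp
    also have "\<dots> \<le> real N * (real k / (real k - 1))"
      using mult_left_mono[OF part1, of "real N"] Npos by simp
    finally have "real N * Min T \<le> real N * (real k / (real k - 1))" .
    then show ?thesis unfolding msdef using Npos by (simp only: mult_le_cancel_left_pos)
  qed
  have part_eq: "class_margin k w = arccos (- 1 / (real k - 1))
         \<and> min_sample_margin k N w z y = real k / (real k - 1)" if C: C
  proof
    have "Q \<subseteq> {- 1 / (real k - 1)}" using C unfolding C_def Q_def by auto
    then have "Q = {- 1 / (real k - 1)}" using Qne by blast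
    then show "class_margin k w = arccos (- 1 / (real k - 1))" unfolding cmdef by simp
  next
    have ti: "- t i = real k / (real k - 1)" if "i < N" for i
    proof -
      have yi: "y i \<in> {1..k}" using yK that by simp
      have mo: "max_other k w (y i) (w (y i)) = -1 / (real k - 1)"
        by (rule mo_const[OF yi assms(2)]) (use C yi in \<open>auto simp: C_def\<close>)
      have "w (y i) \<bullet> w (y i) = 1" using wn yi norm_eq_1 by metis
      then have "- t i = 1 + 1 / (real k - 1)" unfolding t_def using C that mo by (simp add: C_def)
      also have "\<dots> = real k / (real k - 1)" using k1 by (simp add: field_simps)
      finally show ?thesis .
    qed
    have "T = {real k / (real k - 1)}" unfolding Teq using ti Npos by force
    then show "min_sample_margin k N w z y = real k / (real k - 1)" unfolding msdef by simp
  qed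
  show ?thesis
    using part1 eqdir convdir part_eq part_cm part_ms unfolding C_def by blast
qed

end
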